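(* Let $\mathcal{L}$ be a set closed under a unary connective $\neg$, and let $\mathcal{C}: 2^{\mathcal{L}}\to 2^{\mathcal{L}}$ be a C-logics satisfying Weak Compactness, $\neg$-R1 and $\neg$-R2. If $A\subseteq\mathcal{L}$, $a\in\mathcal{L}$ and $a\notin\mathcal{C}(A)$, then there is a maximal consistent set $B\supseteq A$ such that $a\notin B$.
   Context: A C-logics is a map $\mathcal{C}: 2^{\mathcal{L}}\to 2^{\mathcal{L}}$ satisfying Inclusion ($A\subseteq\mathcal{C}(A)$) and Cumulativity ($A\subseteq B\subseteq\mathcal{C}(A)\Rightarrow\mathcal{C}(A)=\mathcal{C}(B)$). Weak Compactness: if $\mathcal{C}(A)=\mathcal{L}$ then $\mathcal{C}(B)=\mathcal{L}$ for some finite $B\subseteq A$. $\neg$-R1: $\mathcal{C}(A\cup\{a,\neg a\})=\mathcal{L}$. $\neg$-R2: if $\mathcal{C}(A\cup\{\neg a\})=\mathcal{L}$ then $a\in\mathcal{C}(A)$ (for all $A\subseteq\mathcal{L}$, $a\in\mathcal{L}$). $A$ is consistent iff $\mathcal{C}(A)\neq\mathcal{L}$; maximal consistent iff consistent and every strict superset in $\mathcal{L}$ is inconsistent. *)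

theory Defs
  imports Main
begin

text \<open>The language L is modelled as the universe of a type 'a; the unary connective
  neg is a function 'a => 'a, so L is automatically closed under it.\<close>

definition C_logic :: "('a set \<Rightarrow> 'a set) \<Rightarrow> bool" where
  "C_logic C \<longleftrightarrow>
     (\<forall>A. A \<subseteq> C A) \<and>
     (\<forall>A B. A \<subseteq> B \<and> B \<subseteq> C A \<longrightarrow> C A = C B)"

definition weak_compactness :: "('a set \<Rightarrow> 'a set) \<Rightarrow> bool" where
  "weak_compactness C \<longleftrightarrow>
     (\<forall>A. C A = UNIV \<longrightarrow> (\<exists>B. B \<subseteq> A \<and> finite B \<and> C B = UNIV))"

definition neg_R1 :: "('a set \<Rightarrow> 'a set) \<Rightarrow> ('a \<Rightarrow> 'a) \<Rightarrow> bool" where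
  "neg_R1 C neg \<longleftrightarrow> (\<forall>A a. C (A \<union> {a, neg a}) = UNIV)"

definition neg_R2 :: "('a set \<Rightarrow> 'a set) \<Rightarrow> ('a \<Rightarrow> 'a) \<Rightarrow> bool" where
  "neg_R2 C neg \<longleftrightarrow> (\<forall>A a. C (A \<union> {neg a}) = UNIV \<longrightarrow> a \<in> C A)"

definition consistent :: "('a set \<Rightarrow> 'a set) \<Rightarrow> 'a set \<Rightarrow> bool" where
  "consistent C A \<longleftrightarrow> C A \<noteq> UNIV"

definition maximal_consistent :: "('a set \<Rightarrow> 'a set) \<Rightarrow> 'a set \<Rightarrow> bool" where
  "maximal_consistent C A \<longleftrightarrow>
     consistent C A \<and> (\<forall>B. A \<subset> B \<longrightarrow> \<not> consistent C B)"

end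

theory Submission
  imports Defs
begin

theorem lemma14:
  fixes C :: "'a set \<Rightarrow> 'a set" and neg :: "'a \<Rightarrow> 'a"
    and A :: "'a set" and a :: 'a
  assumes "C_logic C"
    and "weak_compactness C"
    and "neg_R1 C neg"
    and "neg_R2 C neg"
    and "a \<notin> C A"
  shows "\<exists>B. A \<subseteq> B \<and> maximal_consistent C B \<and> a \<notin> B"
proof -
  have cum: "\<And>X Y. X \<subseteq> Y \<Longrightarrow> Y \<subseteq> C X \<Longrightarrow> C X = C Y"
    using assms(1) unfolding C_logic_def by blast
  have up: "C Y = UNIV" if "X \<subseteq> Y" "C X = UNIV" for X Y
    using cum[OF that(1)] that(2) by simp
  have A0: "C (A \<union> {neg a}) \<noteq> UNIV"
    using assms(4,5) unfolding neg_R2_def by blast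
  define S where "S = {X. A \<union> {neg a} \<subseteq> X \<and> C X \<noteq> UNIV}"
  have S_iff: "X \<in> S \<longleftrightarrow> A \<union> {neg a} \<subseteq> X \<and> C X \<noteq> UNIV" for X
    unfolding S_def by (rule mem_Collect_eq)
  have "A \<union> {neg a} \<in> S" using A0 S_iff by blast
  then have "S \<noteq> {}" by blast
  moreover have "\<Union>c \<in> S" if c: "c \<noteq> {}" "subset.chain S c" for c
  proof -
    have sub: "c \<subseteq> S" using c(2) unfolding subset.chain_def by simp
    obtain X0 where "X0 \<in> c" using c(1) by blast
    then have "A \<union> {neg a} \<subseteq> X0" using sub S_iff by blast
    then have 1: "A \<union> {neg a} \<subseteq> \<Union>c" using \<open>X0 \<in> c\<close> by (meson Union_upper subset_trans)
    have 2: "C (\<Union>c) \<noteq> UNIV"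
    proof
      assume "C (\<Union>c) = UNIV"
      then have "\<exists>F. F \<subseteq> \<Union>c \<and> finite F \<and> C F = UNIV"
        using assms(2) unfolding weak_compactness_def by (elim allE[of _ "\<Union>c"] impE)
      then obtain F where F: "F \<subseteq> \<Union>c" "finite F" "C F = UNIV" by (elim exE conjE)
      obtain X where X: "X \<in> c" "F \<subseteq> X"
        using finite_subset_Union_chain[OF F(2) F(1) c(1) c(2)] by blast
      have "C X = UNIV" using up[OF X(2) F(3)] .
      moreover have "C X \<noteq> UNIV" using X(1) sub S_iff by blast
      ultimately show False by simp
    qed
    show ?thesis using 1 2 S_iff by blast
  qed
  ultimately obtain M where M: "M \<in> S" "\<forall>X\<in>S. M \<subseteq> X \<longrightarrow> X = M"
    using subset_Zorn_nonempty[of S] by blast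
  have MA: "A \<union> {neg a} \<subseteq> M" and MC: "C M \<noteq> UNIV" using M(1) S_iff by blast+
  have "maximal_consistent C M"
    unfolding maximal_consistent_def consistent_def
  proof (intro conjI allI impI MC notI)
    fix B assume B: "M \<subset> B" "C B \<noteq> UNIV"
    then have "B \<in> S" using MA S_iff by blast
    then show False using M(2) B(1) by blast
  qed
  moreover have "a \<notin> M"
  proof
    assume "a \<in> M"
    then have "M \<union> {a, neg a} = M" using MA by blast
    moreover have "C (M \<union> {a, neg a}) = UNIV" using assms(3) unfolding neg_R1_def by blast
    ultimately show False using MC by simp
  qed
  ultimately show ?thesis using MA by blast
qed

end
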